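(* Let $T=(p,q:F\to E)$ be an LR textile system with $p$ surjective and $F$ source-free, and let $\Lambda=\Lambda_T$. Suppose that for each $z\in E^0$ we have a partition $\{\mathcal E^1_z,\dots,\mathcal E^{m(z)}_z\}$ of $zE^1$ into nonempty sets such that for each $u\in F^0$ there are $z\in E^0$ and $j$ with $q(uF^1)\subseteq\mathcal E^j_z$. For $v\in F^0$, $1\le i\le m(p(v))$, set $\mathcal F^i_v=vF^1\cap p^{-1}(\mathcal E^i_{p(v)})$, and for $z\in E^0$, $1\le i\le m(z)$, set $\mathcal G^i_z=\mathcal E^i_z\sqcup r_F(q^{-1}(\mathcal E^i_z))$. Let $\widetilde F$ be the directed-graph insplit of $F$ with respect to $\{\mathcal F^i_v\}$ and $\widetilde E$ that of $E$ with respect to $\{\mathcal E^i_z\}$, and define $\tilde p(v^i)=p(v)^i$, $\tilde p(\lambda^i)=p(\lambda)^i$, $\tilde q(v^i)=q(v)^j$, $\tilde q(\lambda^i)=q(\lambda)^j$ for $\lambda\in F^1$, $v\in F^0$, where (for $\lambda$) $v=s(\lambda)$ and $j$ is the index with $q(vF^1)\subseteq\mathcal E^j_{q(v)}$. Then (1) $\{\mathcal F^i_v\}$ is a partition of $F^1$ into nonempty sets, $\tilde p,\tilde q:\widetilde F\to\widetilde E$ are well-defined graph homomorphisms and $\widetilde T=(\tilde p,\tilde q:\widetilde F\to\widetilde E)$ is an LR textile system; (2) $\{\mathcal G^i_z\}$ is a partition of $\Lambda^1=E^1\sqcup F^0$ satisfying the pairing condition; (3) the 2-graph $\Lambda_{\widetilde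 T}$ coincides with the 2-graph $\Lambda_I$ obtained by 2-graph insplitting $\Lambda$ with respect to $\{\mathcal G^i_z\}$.
   Context: Directed graph $E=(E^0,E^1,r,s)$, $zE^1=r^{-1}(z)$; $F$ source-free: $r$ onto $F^0$. Textile system $T=(p,q:F\to E)$: graph homomorphisms $p,q$ (commuting with $r,s$) with $f\mapsto(r(f),p(f),s(f),q(f))$ injective on $F^1$. LR: $p$ has unique $r$-path lifting (for $v\in F^0,e\in E^1$ with $p(v)=r(e)$, exactly one $f\in F^1$ with $r(f)=v,p(f)=e$) and $q$ has unique $s$-path lifting (same with $s$). Directed-graph insplitting: with partitions of $vF^1$ into nonempty $\mathcal F^1_v,\dots,\mathcal F^{m(v)}_v$, the insplit graph has vertices $v^i$, edges $f^j$ ($1\le j\le m(s(f))$), $s(f^j)=s(f)^j$, $r(f^j)=r(f)^k$ if $f\in\mathcal F^k_{r(f)}$. 2-graph: category $\Lambda$ with degree functor $d:\Lambda\to\mathbb N^2$ having unique factorization; $\Lambda^m=d^{-1}(m)$; $\lambda(m,n)$ is the factor of degree $n-m$ at position $[m,n]$; determined by its 1-skeleton and commuting squares. $\Lambda_T$: vertices $E^0$, color-1 edges $E^1$, color-2 edges $F^0$ with $r(w)=q(w)$, $s(w)=p(w)$; commuting squares $ve\sim e'w$ iff some $f\in F^1$ has $r(f)=v,s(f)=w,p(f)=e,q(f)=e'$. The pairing condition for a partition $\{\mathcal G^j_z\}$ of $\Lambda^1$ (with $\{\mathcal G^j_z\}_j$ a partition of the edges with range $z$): for every $\lambda\in\Lambda^{\varepsilon_1+\varepsilon_2}$,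 $\lambda(0,\varepsilon_1)$ and $\lambda(0,\varepsilon_2)$ are in the same set. Insplit 2-graph $\Lambda_I$: vertices $z^i$; edges $f^i$ ($1\le i\le m(s(f))$), same degree, $s(f^i)=s(f)^i$, $r(f^i)=r(f)^j$ where $f\in\mathcal G^j_{r(f)}$; commuting squares $f^ig^k\sim_I a^jb^k$ iff $g\in\mathcal G^i_{s(f)}$, $b\in\mathcal G^j_{s(a)}$, $fg\sim ab$ in $\Lambda$. "Coincides" means: same vertices $z^i$, same edges $e^i$ and $v^i$ with same degree, range, source and same commuting squares. *)

theory Defs
  imports "Graph_Theory.Digraph"
begin

text \<open>Convention: a directed graph E = (E0,E1,r,s) is a Graph_Theory pre_digraph with
  r = head and s = tail; so zE1 = in_arcs E z.\<close>

definition graph_hom ::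
  "('v,'e) pre_digraph \<Rightarrow> ('w,'d) pre_digraph \<Rightarrow> ('v \<Rightarrow> 'w) \<Rightarrow> ('e \<Rightarrow> 'd) \<Rightarrow> bool" where
  "graph_hom G H phv phe \<longleftrightarrow>
     (\<forall>v\<in>verts G. phv v \<in> verts H) \<and>
     (\<forall>e\<in>arcs G. phe e \<in> arcs H \<and> head H (phe e) = phv (head G e)
                              \<and> tail H (phe e) = phv (tail G e))"

definition textile_system ::
  "('v,'e) pre_digraph \<Rightarrow> ('w,'d) pre_digraph \<Rightarrow> ('v \<Rightarrow> 'w) \<Rightarrow> ('e \<Rightarrow> 'd)
     \<Rightarrow> ('v \<Rightarrow> 'w) \<Rightarrow> ('e \<Rightarrow> 'd) \<Rightarrow> bool" where
  "textile_system F E pv pe qv qe \<longleftrightarrow>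
     graph_hom F E pv pe \<and> graph_hom F E qv qe \<and>
     inj_on (\<lambda>f. (head F f, pe f, tail F f, qe f)) (arcs F)"

definition LR_textile ::
  "('v,'e) pre_digraph \<Rightarrow> ('w,'d) pre_digraph \<Rightarrow> ('v \<Rightarrow> 'w) \<Rightarrow> ('e \<Rightarrow> 'd)
     \<Rightarrow> ('v \<Rightarrow> 'w) \<Rightarrow> ('e \<Rightarrow> 'd) \<Rightarrow> bool" where
  "LR_textile F E pv pe qv qe \<longleftrightarrow>
     textile_system F E pv pe qv qe \<and>
     (\<forall>v\<in>verts F. \<forall>e\<in>arcs E. pv v = head E e \<longrightarrow>
         (\<exists>!f. f \<in> arcs F \<and> head F f = v \<and> pe f = e)) \<and>
     (\<forall>v\<in>verts F. \<forall>e\<in>arcs E. qv v = tail E e \<longrightarrow>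
         (\<exists>!f. f \<in> arcs F \<and> tail F f = v \<and> qe f = e))"

definition source_free :: "('v,'e) pre_digraph \<Rightarrow> bool" where
  "source_free F \<longleftrightarrow> head F ` arcs F = verts F"

definition indexed_partition :: "'a set \<Rightarrow> nat \<Rightarrow> (nat \<Rightarrow> 'a set) \<Rightarrow> bool" where
  "indexed_partition A m P \<longleftrightarrow>
     (\<forall>i\<in>{1..m}. P i \<noteq> {}) \<and>
     (\<forall>i\<in>{1..m}. \<forall>j\<in>{1..m}. i \<noteq> j \<longrightarrow> P i \<inter> P j = {}) \<and>
     (\<Union>i\<in>{1..m}. P i) = A"

definition part_index :: "('v \<Rightarrow> nat) \<Rightarrow> ('v \<Rightarrow> nat \<Rightarrow> 'a set) \<Rightarrow> 'v \<Rightarrow> 'a \<Rightarrow> nat" where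
  "part_index m P z x = (THE k. k \<in> {1..m z} \<and> x \<in> P z k)"

text \<open>Directed-graph insplitting; the vertex v^i is (v,i), the edge f^j is (f,j).\<close>
definition insplit ::
  "('v,'e) pre_digraph \<Rightarrow> ('v \<Rightarrow> nat) \<Rightarrow> ('v \<Rightarrow> nat \<Rightarrow> 'e set) \<Rightarrow> ('v \<times> nat, 'e \<times> nat) pre_digraph" where
  "insplit G m P = \<lparr> verts = {(v,i). v \<in> verts G \<and> i \<in> {1..m v}},
                     arcs = {(f,j). f \<in> arcs G \<and> j \<in> {1..m (tail G f)}},
                     tail = (\<lambda>(f,j). (tail G f, j)),
                     head = (\<lambda>(f,j). (head G f, part_index m P (head G f) f)) \<rparr>"

text \<open>A 2-graph presented by its 1-skeleton (vertices, edges with degree, range, source)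
  and its commuting squares.  A square (a,b,c,d) means a b \<sim> c d, where a, d have degree
  e2 and b, c have degree e1; the element lambda of degree e1+e2 it represents has
  lambda(0,e1) = c and lambda(0,e2) = a.\<close>
record ('a,'b) two_graph =
  tverts :: "'a set"
  tedges :: "'b set"
  tdeg :: "'b \<Rightarrow> nat \<times> nat"
  trng :: "'b \<Rightarrow> 'a"
  tsrc :: "'b \<Rightarrow> 'a"
  tsq :: "('b \<times> 'b \<times> 'b \<times> 'b) set"

text \<open>The 2-graph Lambda_T: color-1 edges Inl e (e in E1), color-2 edges Inr w (w in F0).\<close>
definition Lambda_T ::
  "('v,'e) pre_digraph \<Rightarrow> ('w,'d) pre_digraph \<Rightarrow> ('v \<Rightarrow> 'w) \<Rightarrow> ('e \<Rightarrow> 'd)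
     \<Rightarrow> ('v \<Rightarrow> 'w) \<Rightarrow> ('e \<Rightarrow> 'd) \<Rightarrow> ('w, 'd + 'v) two_graph" where
  "Lambda_T F E pv pe qv qe = \<lparr>
     tverts = verts E,
     tedges = Inl ` arcs E \<union> Inr ` verts F,
     tdeg = case_sum (\<lambda>e. (1,0)) (\<lambda>w. (0,1)),
     trng = case_sum (head E) qv,
     tsrc = case_sum (tail E) pv,
     tsq = {(Inr (head F f), Inl (pe f), Inl (qe f), Inr (tail F f)) | f. f \<in> arcs F} \<rparr>"

text \<open>Pairing condition: for each lambda of degree e1+e2, lambda(0,e1) and lambda(0,e2)
  lie in the same set of the partition.\<close>
definition pairing_condition ::
  "('a,'b) two_graph \<Rightarrow> ('a \<Rightarrow> nat) \<Rightarrow> ('a \<Rightarrow> nat \<Rightarrow> 'b set) \<Rightarrow> bool" where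
  "pairing_condition L m G \<longleftrightarrow>
     (\<forall>(a,b,c,d) \<in> tsq L. \<exists>z\<in>tverts L. \<exists>j\<in>{1..m z}. a \<in> G z j \<and> c \<in> G z j)"

definition insplit2 ::
  "('a,'b) two_graph \<Rightarrow> ('a \<Rightarrow> nat) \<Rightarrow> ('a \<Rightarrow> nat \<Rightarrow> 'b set) \<Rightarrow> ('a \<times> nat, 'b \<times> nat) two_graph" where
  "insplit2 L m G = \<lparr>
     tverts = {(z,i). z \<in> tverts L \<and> i \<in> {1..m z}},
     tedges = {(f,i). f \<in> tedges L \<and> i \<in> {1..m (tsrc L f)}},
     tdeg = (\<lambda>(f,i). tdeg L f),
     trng = (\<lambda>(f,i). (trng L f, part_index m G (trng L f) f)),
     tsrc = (\<lambda>(f,i). (tsrc L f, i)),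
     tsq = {((f,i),(g,k),(a,j),(b,k)) | f g a b i j k.
              (f,g,a,b) \<in> tsq L \<and> i \<in> {1..m (tsrc L f)} \<and> j \<in> {1..m (tsrc L a)}
              \<and> k \<in> {1..m (tsrc L g)} \<and> g \<in> G (tsrc L f) i \<and> b \<in> G (tsrc L a) j} \<rparr>"

definition two_graph_coincide ::
  "('a,'b) two_graph \<Rightarrow> ('a,'c) two_graph \<Rightarrow> ('b \<Rightarrow> 'c) \<Rightarrow> bool" where
  "two_graph_coincide A B phi \<longleftrightarrow>
     tverts A = tverts B \<and> bij_betw phi (tedges A) (tedges B) \<and>
     (\<forall>x\<in>tedges A. tdeg B (phi x) = tdeg A x \<and> trng B (phi x) = trng A x
                    \<and> tsrc B (phi x) = tsrc A x) \<and>
     (\<lambda>(a,b,c,d). (phi a, phi b, phi c, phi d)) ` tsq A = tsq B"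

definition edge_ident :: "('d \<times> nat) + ('v \<times> nat) \<Rightarrow> ('d + 'v) \<times> nat" where
  "edge_ident = case_sum (\<lambda>(e,i). (Inl e, i)) (\<lambda>(v,i). (Inr v, i))"

end

theory Submission
  imports Defs
begin

lemma pidx:
  assumes "indexed_partition A (m z) (P z)" "k \<in> {1..m z}" "x \<in> P z k"
  shows "part_index m P z x = k"
  unfolding part_index_def
proof (rule the_equality)
  show "k \<in> {1..m z} \<and> x \<in> P z k" using assms by simp
next
  fix k' assume "k' \<in> {1..m z} \<and> x \<in> P z k'"
  then show "k' = k" using assms unfolding indexed_partition_def by blast
qed

theorem theorem7p11:
  fixes F :: "('v,'e) pre_digraph" and E :: "('w,'d) pre_digraph"
    and pv qv :: "'v \<Rightarrow> 'w" and pe qe :: "'e \<Rightarrow> 'd"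
    and m :: "'w \<Rightarrow> nat" and EP :: "'w \<Rightarrow> nat \<Rightarrow> 'd set"
  assumes wfF: "wf_digraph F" and wfE: "wf_digraph E"
    and LR: "LR_textile F E pv pe qv qe"
    and p_surj: "pv ` verts F = verts E" "pe ` arcs F = arcs E"
    and srcfree: "source_free F"
    and EPpart: "\<forall>z\<in>verts E. indexed_partition (in_arcs E z) (m z) (EP z)"
    and qcond: "\<forall>u\<in>verts F. \<exists>z\<in>verts E. \<exists>j\<in>{1..m z}. qe ` in_arcs F u \<subseteq> EP z j"
  defines "FP \<equiv> \<lambda>v i. {f \<in> in_arcs F v. pe f \<in> EP (pv v) i}"
    and "GP \<equiv> \<lambda>z i. Inl ` EP z i \<union> Inr ` (head F ` {f \<in> arcs F. qe f \<in> EP z i})"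
    and "Ft \<equiv> insplit F (\<lambda>v. m (pv v)) (\<lambda>v i. {f \<in> in_arcs F v. pe f \<in> EP (pv v) i})"
    and "Et \<equiv> insplit E m EP"
    and "ptv \<equiv> \<lambda>(v,i). (pv v, i)" and "pte \<equiv> \<lambda>(f,i). (pe f, i)"
    and "qtv \<equiv> \<lambda>(v,i). (qv v, (THE j. j \<in> {1..m (qv v)} \<and> qe ` in_arcs F v \<subseteq> EP (qv v) j))" and "qte \<equiv> \<lambda>(f,i). (qe f, (\<lambda>v. (THE j. j \<in> {1..m (qv v)} \<and> qe ` in_arcs F v \<subseteq> EP (qv v) j)) (tail F f))"
    and "\<Lambda> \<equiv> Lambda_T F E pv pe qv qe"
  shows "((\<forall>v\<in>verts F. indexed_partition (in_arcs F v) (m (pv v)) (FP v))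
         \<and> graph_hom Ft Et ptv pte \<and> graph_hom Ft Et qtv qte
         \<and> LR_textile Ft Et ptv pte qtv qte)
         \<and> ((\<forall>z\<in>verts E. indexed_partition {x \<in> tedges \<Lambda>. trng \<Lambda> x = z} (m z) (GP z))
         \<and> pairing_condition \<Lambda> m GP)
         \<and> two_graph_coincide (Lambda_T Ft Et ptv pte qtv qte) (insplit2 \<Lambda> m GP) edge_ident"
proof -
  have homP: "graph_hom F E pv pe" and homQ: "graph_hom F E qv qe"
    and injF: "inj_on (\<lambda>f. (head F f, pe f, tail F f, qe f)) (arcs F)"
    using LR by (auto simp: LR_textile_def textile_system_def)
  have liftP: "\<And>v e. v\<in>verts F \<Longrightarrow> e\<in>arcs E \<Longrightarrow> pv v = head E e \<Longrightarrow>
         (\<exists>!f. f \<in> arcs F \<and> head F f = v \<and> pe f = e)"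
   and liftQ: "\<And>v e. v\<in>verts F \<Longrightarrow> e\<in>arcs E \<Longrightarrow> qv v = tail E e \<Longrightarrow>
         (\<exists>!f. f \<in> arcs F \<and> tail F f = v \<and> qe f = e)"
    using LR unfolding LR_textile_def by blast+
  interpret wF: wf_digraph F by (rule wfF)
  interpret wE: wf_digraph E by (rule wfE)
  have pvV: "\<And>v. v \<in> verts F \<Longrightarrow> pv v \<in> verts E" and qvV: "\<And>v. v \<in> verts F \<Longrightarrow> qv v \<in> verts E"
    using homP homQ unfolding graph_hom_def by blast+
  have peA: "\<And>f. f \<in> arcs F \<Longrightarrow> pe f \<in> arcs E \<and> head E (pe f) = pv (head F f) \<and> tail E (pe f) = pv (tail F f)"
    using homP unfolding graph_hom_def by blast
  have qeA: "\<And>f. f \<in> arcs F \<Longrightarrow> qe f \<in> arcs E \<and> head E (qe f) = qv (head F f) \<and> tail E (qe f) = qv (tail F f)"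
    using homQ unfolding graph_hom_def by blast
  have EPsub: "\<And>z i. z\<in>verts E \<Longrightarrow> i\<in>{1..m z} \<Longrightarrow> EP z i \<subseteq> in_arcs E z"
    using EPpart unfolding indexed_partition_def by blast
  have EPne: "\<And>z i. z\<in>verts E \<Longrightarrow> i\<in>{1..m z} \<Longrightarrow> EP z i \<noteq> {}"
    using EPpart unfolding indexed_partition_def by blast
  have EPdisj: "\<And>z i j x. z\<in>verts E \<Longrightarrow> i\<in>{1..m z} \<Longrightarrow> j\<in>{1..m z} \<Longrightarrow> x \<in> EP z i \<Longrightarrow> x \<in> EP z j \<Longrightarrow> i = j"
    using EPpart unfolding indexed_partition_def by blast
  have EPcov: "\<And>e. e\<in>arcs E \<Longrightarrow> \<exists>i\<in>{1..m (head E e)}. e \<in> EP (head E e) i"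
  proof -
    fix e assume e: "e \<in> arcs E"
    then have "e \<in> in_arcs E (head E e)" by (simp add: in_arcs_def)
    moreover have "indexed_partition (in_arcs E (head E e)) (m (head E e)) (EP (head E e))"
      using EPpart e by simp
    ultimately show "\<exists>i\<in>{1..m (head E e)}. e \<in> EP (head E e) i" unfolding indexed_partition_def by blast
  qed
  have EPhead: "\<And>z i e. z\<in>verts E \<Longrightarrow> i\<in>{1..m z} \<Longrightarrow> e \<in> EP z i \<Longrightarrow> e \<in> arcs E \<and> head E e = z"
    using EPsub by (fastforce simp: in_arcs_def)
  have inne: "\<And>v. v \<in> verts F \<Longrightarrow> \<exists>f. f \<in> arcs F \<and> head F f = v"
    using srcfree unfolding source_free_def by (metis imageE)
  define J where "J = (\<lambda>v. THE j. j \<in> {1..m (qv v)} \<and> qe ` in_arcs F v \<subseteq> EP (qv v) j)"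
  have J: "\<And>v. v \<in> verts F \<Longrightarrow> J v \<in> {1..m (qv v)} \<and> qe ` in_arcs F v \<subseteq> EP (qv v) (J v)"
  proof -
    fix v assume v: "v \<in> verts F"
    obtain z j where z: "z \<in> verts E" "j\<in>{1..m z}" "qe ` in_arcs F v \<subseteq> EP z j" using qcond v by blast
    obtain f where f: "f \<in> arcs F" "head F f = v" using inne v by blast
    have fi: "f \<in> in_arcs F v" using f by (simp add: in_arcs_def)
    have "qe f \<in> EP z j" using z fi by blast
    then have zq: "z = qv v" using EPhead[OF z(1,2)] qeA[OF f(1)] f by simp
    have "(THE j. j \<in> {1..m (qv v)} \<and> qe ` in_arcs F v \<subseteq> EP (qv v) j) = j"
    proof (rule the_equality)
      show "j \<in> {1..m (qv v)} \<and> qe ` in_arcs F v \<subseteq> EP (qv v) j" using z zq by simp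
    next
      fix j' assume "j' \<in> {1..m (qv v)} \<and> qe ` in_arcs F v \<subseteq> EP (qv v) j'"
      then show "j' = j" using EPdisj[of z j' j "qe f"] z zq fi \<open>qe f \<in> EP z j\<close> by blast
    qed
    then show "J v \<in> {1..m (qv v)} \<and> qe ` in_arcs F v \<subseteq> EP (qv v) (J v)" using z zq J_def by simp
  qed
  have Juniq: "\<And>v f k. f \<in> arcs F \<Longrightarrow> head F f = v \<Longrightarrow> k\<in>{1..m (qv v)} \<Longrightarrow> qe f \<in> EP (qv v) k \<Longrightarrow> k = J v"
  proof -
    fix v f k assume a: "f \<in> arcs F" "head F f = v" "k\<in>{1..m (qv v)}" "qe f \<in> EP (qv v) k"
    have v: "v \<in> verts F" using a by auto
    have "qe f \<in> EP (qv v) (J v)" using J[OF v] a by (auto simp: in_arcs_def)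
    then show "k = J v" using EPdisj[OF qvV[OF v] a(3) _ a(4)] J[OF v] by blast
  qed
  have qtv_eq: "qtv = (\<lambda>(v,i). (qv v, J v))" and qte_eq: "qte = (\<lambda>(f,i). (qe f, J (tail F f)))"
    unfolding qtv_def qte_def J_def by simp_all
  have Ftv: "verts Ft = {(v,i). v \<in> verts F \<and> i \<in> {1..m (pv v)}}"
    and Fta: "arcs Ft = {(f,j). f \<in> arcs F \<and> j \<in> {1..m (pv (tail F f))}}"
    and Ftt: "tail Ft = (\<lambda>(f,j). (tail F f, j))"
    and Fth: "head Ft = (\<lambda>(f,j). (head F f, part_index (\<lambda>v. m (pv v)) FP (head F f) f))"
    by (simp_all add: Ft_def FP_def insplit_def)
  have Etv: "verts Et = {(v,i). v \<in> verts E \<and> i \<in> {1..m v}}"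
    and Eta: "arcs Et = {(f,j). f \<in> arcs E \<and> j \<in> {1..m (tail E f)}}"
    and Ett: "tail Et = (\<lambda>(f,j). (tail E f, j))"
    and Eth: "head Et = (\<lambda>(f,j). (head E f, part_index m EP (head E f) f))"
    by (simp_all add: Et_def insplit_def)
  define Eidx where "Eidx = (\<lambda>e. part_index m EP (head E e) e)"
  have Eidx: "\<And>e. e \<in> arcs E \<Longrightarrow> Eidx e \<in> {1..m (head E e)} \<and> e \<in> EP (head E e) (Eidx e)"
  proof -
    fix e assume e: "e \<in> arcs E"
    obtain i where i: "i\<in>{1..m (head E e)}" "e \<in> EP (head E e) i" using EPcov[OF e] by blast
    have "Eidx e = i" unfolding Eidx_def by (rule pidx[where A="in_arcs E (head E e)" and m=m and P=EP and z="head E e", OF _ i]) (use EPpart e in simp)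
    then show "Eidx e \<in> {1..m (head E e)} \<and> e \<in> EP (head E e) (Eidx e)" using i by simp
  qed
  have P1: "\<forall>v\<in>verts F. indexed_partition (in_arcs F v) (m (pv v)) (FP v)"
  proof
    fix v assume v: "v \<in> verts F"
    show "indexed_partition (in_arcs F v) (m (pv v)) (FP v)"
      unfolding indexed_partition_def
    proof (intro conjI ballI impI)
      fix i assume i: "i \<in> {1..m (pv v)}"
      obtain e where e: "e \<in> EP (pv v) i" using EPne[OF pvV[OF v] i] by blast
      have eh: "e \<in> arcs E" "head E e = pv v" using EPhead[OF pvV[OF v] i e] by auto
      obtain f where "f \<in> arcs F" "head F f = v" "pe f = e" using liftP[OF v eh(1)] eh(2) by metis
      then have "f \<in> FP v i" using e by (simp add: FP_def in_arcs_def)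
      then show "FP v i \<noteq> {}" by blast
    next
      fix i j assume "i \<in> {1..m (pv v)}" "j \<in> {1..m (pv v)}" "i \<noteq> j"
      then show "FP v i \<inter> FP v j = {}"
        using EPdisj[OF pvV[OF v], of i j] unfolding FP_def by blast
    next
      show "(\<Union>i\<in>{1..m (pv v)}. FP v i) = in_arcs F v"
      proof
        show "(\<Union>i\<in>{1..m (pv v)}. FP v i) \<subseteq> in_arcs F v" by (auto simp: FP_def)
      next
        show "in_arcs F v \<subseteq> (\<Union>i\<in>{1..m (pv v)}. FP v i)"
        proof
          fix f assume f: "f \<in> in_arcs F v"
          then have "pe f \<in> arcs E" "head E (pe f) = pv v" using peA by (auto simp: in_arcs_def)
          then obtain i where "i\<in>{1..m (pv v)}" "pe f \<in> EP (pv v) i" using EPcov by metis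
          then show "f \<in> (\<Union>i\<in>{1..m (pv v)}. FP v i)" using f by (auto simp: FP_def)
        qed
      qed
    qed
  qed
  have FPidx: "\<And>f. f \<in> arcs F \<Longrightarrow> part_index (\<lambda>v. m (pv v)) FP (head F f) f = Eidx (pe f)"
  proof -
    fix f assume f: "f \<in> arcs F"
    have hv: "head F f \<in> verts F" using f by simp
    have eh: "head E (pe f) = pv (head F f)" using peA[OF f] by simp
    have "f \<in> FP (head F f) (Eidx (pe f))" using Eidx[of "pe f"] peA[OF f] f eh
      by (auto simp: FP_def in_arcs_def)
    then show "part_index (\<lambda>v. m (pv v)) FP (head F f) f = Eidx (pe f)"
      using pidx[where A="in_arcs F (head F f)" and m="\<lambda>v. m (pv v)" and P=FP and z="head F f"] P1 hv Eidx[of "pe f"] peA[OF f] eh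
      by simp
  qed
  have Qidx: "\<And>f. f \<in> arcs F \<Longrightarrow> part_index m EP (qv (head F f)) (qe f) = J (head F f)"
  proof -
    fix f assume f: "f \<in> arcs F"
    have hv: "head F f \<in> verts F" using f by simp
    have "qe f \<in> EP (qv (head F f)) (J (head F f))" using J[OF hv] f by (auto simp: in_arcs_def)
    then show "part_index m EP (qv (head F f)) (qe f) = J (head F f)"
      using pidx[where A="in_arcs E (qv (head F f))" and m=m and P=EP and z="qv (head F f)"] J[OF hv] EPpart qvV[OF hv] by blast
  qed
  have hom1: "graph_hom Ft Et ptv pte"
    unfolding graph_hom_def
  proof (intro conjI ballI)
    fix x assume "x \<in> verts Ft"
    then show "ptv x \<in> verts Et" using pvV by (auto simp: Ftv Etv ptv_def)
  next
    fix x assume "x \<in> arcs Ft"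
    then obtain f j where x: "x = (f,j)" "f \<in> arcs F" "j \<in> {1..m (pv (tail F f))}" by (auto simp: Fta)
    show "pte x \<in> arcs Et" using x peA[OF x(2)] by (simp add: Eta pte_def)
    show "head Et (pte x) = ptv (head Ft x)" using x peA[OF x(2)] FPidx[OF x(2)]
      by (simp add: Eth Fth pte_def ptv_def Eidx_def)
    show "tail Et (pte x) = ptv (tail Ft x)" using x peA[OF x(2)]
      by (simp add: Ett Ftt pte_def ptv_def)
  qed
  have hom2: "graph_hom Ft Et qtv qte"
    unfolding graph_hom_def
  proof (intro conjI ballI)
    fix x assume "x \<in> verts Ft"
    then show "qtv x \<in> verts Et" using qvV J by (auto simp: Ftv Etv qtv_eq)
  next
    fix x assume "x \<in> arcs Ft"
    then obtain f j where x: "x = (f,j)" "f \<in> arcs F" "j \<in> {1..m (pv (tail F f))}" by (auto simp: Fta)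
    have tv: "tail F f \<in> verts F" using x by simp
    show "qte x \<in> arcs Et" using x qeA[OF x(2)] J[OF tv] by (simp add: Eta qte_eq)
    show "head Et (qte x) = qtv (head Ft x)" using x qeA[OF x(2)] Qidx[OF x(2)]
      by (simp add: Eth Fth qte_eq qtv_eq)
    show "tail Et (qte x) = qtv (tail Ft x)" using x qeA[OF x(2)]
      by (simp add: Ett Ftt qte_eq qtv_eq)
  qed
  have injt: "inj_on (\<lambda>x. (head Ft x, pte x, tail Ft x, qte x)) (arcs Ft)"
  proof (rule inj_onI)
    fix x y assume x: "x \<in> arcs Ft" and y: "y \<in> arcs Ft" and eq: "(head Ft x, pte x, tail Ft x, qte x) = (head Ft y, pte y, tail Ft y, qte y)"
    obtain f i where xf: "x = (f,i)" "f \<in> arcs F" using x Fta by auto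
    obtain g k where yg: "y = (g,k)" "g \<in> arcs F" using y Fta by auto
    have "head F f = head F g" "pe f = pe g" "tail F f = tail F g" "i = k" "qe f = qe g"
      using eq xf yg by (simp_all add: Fth Ftt pte_def qte_eq)
    then have "f = g" using inj_onD[OF injF _ xf(2) yg(2)] by simp
    then show "x = y" using xf yg \<open>i = k\<close> by simp
  qed
  have liftPt: "\<forall>v\<in>verts Ft. \<forall>e\<in>arcs Et. ptv v = head Et e \<longrightarrow>
         (\<exists>!f. f \<in> arcs Ft \<and> head Ft f = v \<and> pte f = e)"
  proof (intro ballI impI)
    fix vi ej assume vi: "vi \<in> verts Ft" and ej: "ej \<in> arcs Et" and eq: "ptv vi = head Et ej"
    obtain v i where vi': "vi = (v,i)" "v \<in> verts F" "i \<in> {1..m (pv v)}" using vi Ftv by auto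
    obtain e j where ej': "ej = (e,j)" "e \<in> arcs E" "j \<in> {1..m (tail E e)}" using ej Eta by auto
    have eq1: "pv v = head E e" and eq2: "i = Eidx e" using eq vi' ej' by (simp_all add: ptv_def Eth Eidx_def)
    obtain f where f: "f \<in> arcs F" "head F f = v" "pe f = e"
      and fu: "\<And>g. g \<in> arcs F \<Longrightarrow> head F g = v \<Longrightarrow> pe g = e \<Longrightarrow> g = f"
      using liftP[OF vi'(2) ej'(2) eq1] by metis
    show "\<exists>!x. x \<in> arcs Ft \<and> head Ft x = vi \<and> pte x = ej"
    proof (rule ex1I[of _ "(f,j)"])
      show "(f,j) \<in> arcs Ft \<and> head Ft (f,j) = vi \<and> pte (f,j) = ej"
        using f ej' vi' eq2 peA[OF f(1)] FPidx[OF f(1)] by (auto simp: Fta Fth pte_def)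
    next
      fix y assume "y \<in> arcs Ft \<and> head Ft y = vi \<and> pte y = ej"
      then show "y = (f,j)" using fu vi' ej' by (auto simp: Fta Fth pte_def)
    qed
  qed
  have liftQt: "\<forall>v\<in>verts Ft. \<forall>e\<in>arcs Et. qtv v = tail Et e \<longrightarrow>
         (\<exists>!f. f \<in> arcs Ft \<and> tail Ft f = v \<and> qte f = e)"
  proof (intro ballI impI)
    fix vi ej assume vi: "vi \<in> verts Ft" and ej: "ej \<in> arcs Et" and eq: "qtv vi = tail Et ej"
    obtain v i where vi': "vi = (v,i)" "v \<in> verts F" "i \<in> {1..m (pv v)}" using vi Ftv by auto
    obtain e j where ej': "ej = (e,j)" "e \<in> arcs E" "j \<in> {1..m (tail E e)}" using ej Eta by auto
    have eq1: "qv v = tail E e" and eq2: "J v = j" using eq vi' ej' by (simp_all add: qtv_eq Ett)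
    obtain f where f: "f \<in> arcs F" "tail F f = v" "qe f = e"
      and fu: "\<And>g. g \<in> arcs F \<Longrightarrow> tail F g = v \<Longrightarrow> qe g = e \<Longrightarrow> g = f"
      using liftQ[OF vi'(2) ej'(2) eq1] by metis
    show "\<exists>!x. x \<in> arcs Ft \<and> tail Ft x = vi \<and> qte x = ej"
    proof (rule ex1I[of _ "(f,i)"])
      show "(f,i) \<in> arcs Ft \<and> tail Ft (f,i) = vi \<and> qte (f,i) = ej"
        using f ej' vi' eq2 by (auto simp: Fta Ftt qte_eq)
    next
      fix y assume "y \<in> arcs Ft \<and> tail Ft y = vi \<and> qte y = ej"
      then show "y = (f,i)" using fu vi' ej' by (auto simp: Fta Ftt qte_eq)
    qed
  qed
  have LRt: "LR_textile Ft Et ptv pte qtv qte"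
    unfolding LR_textile_def textile_system_def using hom1 hom2 injt liftPt liftQt by blast
  have Lv: "tverts \<Lambda> = verts E" and Le: "tedges \<Lambda> = Inl ` arcs E \<union> Inr ` verts F"
    and Ld: "tdeg \<Lambda> = case_sum (\<lambda>e. (1,0)) (\<lambda>w. (0,1))"
    and Lr: "trng \<Lambda> = case_sum (head E) qv" and Ls: "tsrc \<Lambda> = case_sum (tail E) pv"
    and Lq: "tsq \<Lambda> = {(Inr (head F f), Inl (pe f), Inl (qe f), Inr (tail F f)) | f. f \<in> arcs F}"
    by (simp_all add: \<Lambda>_def Lambda_T_def)
  have GPin: "\<And>f. f \<in> arcs F \<Longrightarrow> Inr (head F f) \<in> GP (qv (head F f)) (J (head F f)) \<and> Inl (qe f) \<in> GP (qv (head F f)) (J (head F f))"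
  proof -
    fix f assume f: "f \<in> arcs F"
    have hv: "head F f \<in> verts F" using f by simp
    have "qe f \<in> EP (qv (head F f)) (J (head F f))" using J[OF hv] f by (auto simp: in_arcs_def)
    then show "Inr (head F f) \<in> GP (qv (head F f)) (J (head F f)) \<and> Inl (qe f) \<in> GP (qv (head F f)) (J (head F f))"
      using f unfolding GP_def by blast
  qed
  have P2: "\<forall>z\<in>verts E. indexed_partition {x \<in> tedges \<Lambda>. trng \<Lambda> x = z} (m z) (GP z)"
  proof
    fix z assume z: "z \<in> verts E"
    show "indexed_partition {x \<in> tedges \<Lambda>. trng \<Lambda> x = z} (m z) (GP z)"
      unfolding indexed_partition_def
    proof (intro conjI ballI impI)
      fix i assume i: "i \<in> {1..m z}"
      then show "GP z i \<noteq> {}" using EPne[OF z i] unfolding GP_def by blast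
    next
      fix i j assume i: "i \<in> {1..m z}" and j: "j \<in> {1..m z}" and ij: "i \<noteq> j"
      show "GP z i \<inter> GP z j = {}"
      proof (rule ccontr)
        assume "GP z i \<inter> GP z j \<noteq> {}"
        then obtain x where x: "x \<in> GP z i" "x \<in> GP z j" by blast
        show False
        proof (cases x)
          case (Inl e)
          then have "e \<in> EP z i" "e \<in> EP z j" using x unfolding GP_def by auto
          then show False using EPdisj[OF z i j] ij by blast
        next
          case (Inr w)
          have "w \<in> head F ` {f \<in> arcs F. qe f \<in> EP z i}" "w \<in> head F ` {f \<in> arcs F. qe f \<in> EP z j}"
            using x Inr unfolding GP_def by auto
          then obtain f g where f: "f \<in> arcs F" "qe f \<in> EP z i" "head F f = w"
            and g: "g \<in> arcs F" "qe g \<in> EP z j" "head F g = w"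
            by auto
          have zf: "z = qv w" using EPhead[OF z i f(2)] qeA[OF f(1)] f(3) by simp
          have "i = J w" using Juniq[OF f(1) f(3)] i f(2) zf by simp
          moreover have "j = J w" using Juniq[OF g(1) g(3)] j g(2) zf by simp
          ultimately show False using ij by simp
        qed
      qed
    next
      show "(\<Union>i\<in>{1..m z}. GP z i) = {x \<in> tedges \<Lambda>. trng \<Lambda> x = z}"
      proof
        show "(\<Union>i\<in>{1..m z}. GP z i) \<subseteq> {x \<in> tedges \<Lambda>. trng \<Lambda> x = z}"
        proof
          fix x assume "x \<in> (\<Union>i\<in>{1..m z}. GP z i)"
          then obtain i where i: "i \<in> {1..m z}" "x \<in> GP z i" by blast
          show "x \<in> {x \<in> tedges \<Lambda>. trng \<Lambda> x = z}"
          proof (cases x)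
            case (Inl e)
            then have "e \<in> EP z i" using i unfolding GP_def by auto
            then show ?thesis using EPhead[OF z i(1)] Inl by (simp add: Le Lr)
          next
            case (Inr w)
            have "w \<in> head F ` {f \<in> arcs F. qe f \<in> EP z i}" using i Inr unfolding GP_def by auto
            then obtain f where f: "f \<in> arcs F" "qe f \<in> EP z i" "head F f = w"
              by auto
            have "z = qv w" using EPhead[OF z i(1) f(2)] qeA[OF f(1)] f(3) by simp
            then show ?thesis using Inr f by (auto simp: Le Lr)
          qed
        qed
      next
        show "{x \<in> tedges \<Lambda>. trng \<Lambda> x = z} \<subseteq> (\<Union>i\<in>{1..m z}. GP z i)"
        proof
          fix x assume x: "x \<in> {x \<in> tedges \<Lambda>. trng \<Lambda> x = z}"
          show "x \<in> (\<Union>i\<in>{1..m z}. GP z i)"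
          proof (cases x)
            case (Inl e)
            then have e: "e \<in> arcs E" "head E e = z" using x by (auto simp: Le Lr)
            then obtain i where "i\<in>{1..m z}" "e \<in> EP z i" using EPcov by metis
            then show ?thesis using Inl unfolding GP_def by blast
          next
            case (Inr w)
            then have w: "w \<in> verts F" "qv w = z" using x by (auto simp: Le Lr)
            obtain f where f: "f \<in> arcs F" "head F f = w" using inne[OF w(1)] by blast
            show ?thesis using GPin[OF f(1)] f w J[OF w(1)] Inr by blast
          qed
        qed
      qed
    qed
  qed
  have pair: "pairing_condition \<Lambda> m GP"
    unfolding pairing_condition_def Lq Lv
  proof (clarify)
    fix f assume f: "f \<in> arcs F"
    have hv: "head F f \<in> verts F" using f by simp
    show "\<exists>z\<in>verts E. \<exists>j\<in>{1..m z}. Inr (head F f) \<in> GP z j \<and> Inl (qe f) \<in> GP z j"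
      using GPin[OF f] qvV[OF hv] J[OF hv] by blast
  qed
  have GPidxL: "\<And>e. e \<in> arcs E \<Longrightarrow> part_index m GP (head E e) (Inl e) = Eidx e"
  proof -
    fix e assume e: "e \<in> arcs E"
    have "Inl e \<in> GP (head E e) (Eidx e)" using Eidx[OF e] unfolding GP_def by blast
    then show "part_index m GP (head E e) (Inl e) = Eidx e"
      using pidx[where A="{x \<in> tedges \<Lambda>. trng \<Lambda> x = head E e}" and m=m and P=GP and z="head E e"]
        P2 Eidx[OF e] e by simp
  qed
  have GPidxR: "\<And>v. v \<in> verts F \<Longrightarrow> part_index m GP (qv v) (Inr v) = J v"
  proof -
    fix v assume v: "v \<in> verts F"
    obtain f where f: "f \<in> arcs F" "head F f = v" using inne[OF v] by blast
    have "Inr v \<in> GP (qv v) (J v)" using GPin[OF f(1)] f(2) by simp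
    then show "part_index m GP (qv v) (Inr v) = J v"
      using pidx[where A="{x \<in> tedges \<Lambda>. trng \<Lambda> x = qv v}" and m=m and P=GP and z="qv v"]
        P2 J[OF v] qvV[OF v] by simp
  qed
  have GPinL: "\<And>e. e \<in> arcs E \<Longrightarrow> Inl e \<in> GP (head E e) (Eidx e)"
    using Eidx unfolding GP_def by blast
  have GPinR: "\<And>v. v \<in> verts F \<Longrightarrow> Inr v \<in> GP (qv v) (J v)"
  proof -
    fix v assume v: "v \<in> verts F"
    obtain f where f: "f \<in> arcs F" "head F f = v" using inne[OF v] by blast
    show "Inr v \<in> GP (qv v) (J v)" using GPin[OF f(1)] f(2) by simp
  qed
  define LT where "LT = Lambda_T Ft Et ptv pte qtv qte"
  define I2 where "I2 = insplit2 \<Lambda> m GP"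
  have LTv: "tverts LT = verts Et" and LTe: "tedges LT = Inl ` arcs Et \<union> Inr ` verts Ft"
    and LTd: "tdeg LT = case_sum (\<lambda>e. (1,0)) (\<lambda>w. (0,1))"
    and LTr: "trng LT = case_sum (head Et) qtv" and LTs: "tsrc LT = case_sum (tail Et) ptv"
    and LTq: "tsq LT = {(Inr (head Ft x), Inl (pte x), Inl (qte x), Inr (tail Ft x)) | x. x \<in> arcs Ft}"
    by (simp_all add: LT_def Lambda_T_def)
  have I2v: "tverts I2 = {(z,i). z \<in> tverts \<Lambda> \<and> i \<in> {1..m z}}"
    and I2e: "tedges I2 = {(f,i). f \<in> tedges \<Lambda> \<and> i \<in> {1..m (tsrc \<Lambda> f)}}"
    and I2d: "tdeg I2 = (\<lambda>(f,i). tdeg \<Lambda> f)"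
    and I2r: "trng I2 = (\<lambda>(f,i). (trng \<Lambda> f, part_index m GP (trng \<Lambda> f) f))"
    and I2s: "tsrc I2 = (\<lambda>(f,i). (tsrc \<Lambda> f, i))"
    and I2q: "tsq I2 = {((f,i),(g,k),(a,j),(b,k)) | f g a b i j k.
              (f,g,a,b) \<in> tsq \<Lambda> \<and> i \<in> {1..m (tsrc \<Lambda> f)} \<and> j \<in> {1..m (tsrc \<Lambda> a)}
              \<and> k \<in> {1..m (tsrc \<Lambda> g)} \<and> g \<in> GP (tsrc \<Lambda> f) i \<and> b \<in> GP (tsrc \<Lambda> a) j}"
    by (simp_all add: I2_def insplit2_def)
  have injE: "inj edge_ident"
    unfolding inj_def edge_ident_def by (auto split: sum.splits)
  have c1: "tverts LT = tverts I2" by (simp add: LTv I2v Etv Lv)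
  have c2: "edge_ident ` tedges LT = tedges I2"
  proof
    show "edge_ident ` tedges LT \<subseteq> tedges I2"
      using peA by (auto simp: LTe I2e Eta Ftv Le Ls edge_ident_def)
  next
    show "tedges I2 \<subseteq> edge_ident ` tedges LT"
    proof
      fix y assume "y \<in> tedges I2"
      then obtain x i where y: "y = (x,i)" "x \<in> tedges \<Lambda>" "i \<in> {1..m (tsrc \<Lambda> x)}" by (auto simp: I2e)
      show "y \<in> edge_ident ` tedges LT"
      proof (cases x)
        case (Inl e)
        then have "Inl (e,i) \<in> tedges LT" "y = edge_ident (Inl (e,i))"
          using y by (auto simp: LTe Eta Le Ls edge_ident_def)
        then show ?thesis by blast
      next
        case (Inr v)
        then have "Inr (v,i) \<in> tedges LT" "y = edge_ident (Inr (v,i))"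
          using y by (auto simp: LTe Ftv Le Ls edge_ident_def)
        then show ?thesis by blast
      qed
    qed
  qed
  have c3: "\<forall>x\<in>tedges LT. tdeg I2 (edge_ident x) = tdeg LT x \<and> trng I2 (edge_ident x) = trng LT x
                    \<and> tsrc I2 (edge_ident x) = tsrc LT x"
  proof
    fix x assume x: "x \<in> tedges LT"
    show "tdeg I2 (edge_ident x) = tdeg LT x \<and> trng I2 (edge_ident x) = trng LT x
                    \<and> tsrc I2 (edge_ident x) = tsrc LT x"
    proof (cases x)
      case (Inl y)
      then obtain e j where y: "x = Inl (e,j)" "e \<in> arcs E" using x by (auto simp: LTe Eta)
      show ?thesis using y GPidxL[OF y(2)]
        by (simp add: edge_ident_def I2d I2r I2s LTd LTr LTs Ld Lr Ls Eth Ett Eidx_def)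
    next
      case (Inr y)
      then obtain v i where y: "x = Inr (v,i)" "v \<in> verts F" using x by (auto simp: LTe Ftv)
      show ?thesis using y GPidxR[OF y(2)]
        by (simp add: edge_ident_def I2d I2r I2s LTd LTr LTs Ld Lr Ls qtv_eq ptv_def)
    qed
  qed
  define mp :: "('d \<times> nat + 'v \<times> nat) \<times> ('d \<times> nat + 'v \<times> nat) \<times> ('d \<times> nat + 'v \<times> nat) \<times> ('d \<times> nat + 'v \<times> nat) \<Rightarrow> _"
    where "mp = (\<lambda>(a,b,c,d). (edge_ident a, edge_ident b, edge_ident c, edge_ident d))"
  have sqf: "\<And>h k. h \<in> arcs F \<Longrightarrow> mp (Inr (head Ft (h,k)), Inl (pte (h,k)), Inl (qte (h,k)), Inr (tail Ft (h,k)))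
     = ((Inr (head F h), Eidx (pe h)), (Inl (pe h), k), (Inl (qe h), J (tail F h)), (Inr (tail F h), k))"
    using FPidx by (simp add: mp_def edge_ident_def Fth Ftt pte_def qte_eq)
  have c4: "mp ` tsq LT = tsq I2"
  proof
    show "mp ` tsq LT \<subseteq> tsq I2"
    proof
      fix y assume "y \<in> mp ` tsq LT"
      then obtain h k where hk: "h \<in> arcs F" "k \<in> {1..m (pv (tail F h))}"
        and y: "y = mp (Inr (head Ft (h,k)), Inl (pte (h,k)), Inl (qte (h,k)), Inr (tail Ft (h,k)))"
        by (auto simp: LTq Fta)
      have tv: "tail F h \<in> verts F" using hk by simp
      have y2: "y = ((Inr (head F h), Eidx (pe h)), (Inl (pe h), k), (Inl (qe h), J (tail F h)), (Inr (tail F h), k))"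
        using y sqf[OF hk(1)] by simp
      have sq: "(Inr (head F h), Inl (pe h), Inl (qe h), Inr (tail F h)) \<in> tsq \<Lambda>" using hk by (auto simp: Lq)
      show "y \<in> tsq I2" unfolding I2q y2
        using sq Eidx[of "pe h"] peA[OF hk(1)] qeA[OF hk(1)] hk J[OF tv] GPinL[of "pe h"] GPinR[OF tv]
        by (simp add: Ls)
    qed
  next
    show "tsq I2 \<subseteq> mp ` tsq LT"
    proof
      fix y assume "y \<in> tsq I2"
      then obtain f g a b i j k where y: "y = ((f,i),(g,k),(a,j),(b,k))" "(f,g,a,b) \<in> tsq \<Lambda>"
        "i \<in> {1..m (tsrc \<Lambda> f)}" "j \<in> {1..m (tsrc \<Lambda> a)}" "k \<in> {1..m (tsrc \<Lambda> g)}"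
        "g \<in> GP (tsrc \<Lambda> f) i" "b \<in> GP (tsrc \<Lambda> a) j"
        unfolding I2q by blast
      obtain h where h: "h \<in> arcs F" "f = Inr (head F h)" "g = Inl (pe h)" "a = Inl (qe h)" "b = Inr (tail F h)"
        using y(2) by (auto simp: Lq)
      have tv: "tail F h \<in> verts F" using h by simp
      have hv: "head F h \<in> verts F" using h by simp
      have i: "i \<in> {1..m (head E (pe h))}" "Inl (pe h) \<in> GP (head E (pe h)) i"
        using y(3,6) h peA[OF h(1)] by (simp_all add: Ls)
      have "part_index m GP (head E (pe h)) (Inl (pe h)) = i"
        using pidx[where A="{x \<in> tedges \<Lambda>. trng \<Lambda> x = head E (pe h)}" and m=m and P=GP and z="head E (pe h)", OF _ i]
          P2 peA[OF h(1)] pvV[OF hv] by simp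
      then have ie: "i = Eidx (pe h)" using GPidxL[of "pe h"] peA[OF h(1)] by simp
      have j: "j \<in> {1..m (qv (tail F h))}" "Inr (tail F h) \<in> GP (qv (tail F h)) j"
        using y(4,7) h qeA[OF h(1)] by (simp_all add: Ls)
      have "part_index m GP (qv (tail F h)) (Inr (tail F h)) = j"
        using pidx[where A="{x \<in> tedges \<Lambda>. trng \<Lambda> x = qv (tail F h)}" and m=m and P=GP and z="qv (tail F h)", OF _ j]
          P2 qvV[OF tv] by simp
      then have je: "j = J (tail F h)" using GPidxR[OF tv] by simp
      have k: "k \<in> {1..m (pv (tail F h))}" using y(5) h peA[OF h(1)] by (simp add: Ls)
      have "y = mp (Inr (head Ft (h,k)), Inl (pte (h,k)), Inl (qte (h,k)), Inr (tail Ft (h,k)))"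
        using sqf[OF h(1), of k] y(1) h ie je by simp
      moreover have "(Inr (head Ft (h,k)), Inl (pte (h,k)), Inl (qte (h,k)), Inr (tail Ft (h,k))) \<in> tsq LT"
        using h k by (auto simp: LTq Fta)
      ultimately show "y \<in> mp ` tsq LT" by blast
    qed
  qed
  have coinc: "two_graph_coincide LT I2 edge_ident"
    unfolding two_graph_coincide_def
    using c1 c2 c3 c4 injE unfolding mp_def bij_betw_def by (auto intro: inj_on_subset)
  show ?thesis using P1 hom1 hom2 LRt P2 pair coinc unfolding LT_def I2_def by blast
qed

end
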